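(* Let $\lambda\neq0$ and $U=\{x\in\mathbb R^4:x^2>|x^4|\}$. Write $x^2=\rho\,\mathrm{ch}(\lambda\varphi)$, $x^4=\rho\,\mathrm{sh}(\lambda\varphi)$ with $\rho>0$, $\varphi\in\mathbb R$ (i.e. $\rho=\sqrt{(x^2)^2-(x^4)^2}$, $\lambda\varphi=\operatorname{artanh}(x^4/x^2)$). Then a smooth covector field $A$ on $U$ satisfies $L_\xi A=0$ for $\xi\in\{e_{13}+\lambda e_{24},\,e_1,\,e_3\}$ if and only if there are smooth functions $C_1,\dots,C_4$ of $\rho\in(0,\infty)$ such that $$A_1=C_1(\rho)\cos\varphi+C_2(\rho)\sin\varphi,\quad A_2=C_3(\rho)\,\mathrm{ch}\,\lambda\varphi+C_4(\rho)\,\mathrm{sh}\,\lambda\varphi,$$ $$A_3=-C_1(\rho)\sin\varphi+C_2(\rho)\cos\varphi,\quad A_4=-C_3(\rho)\,\mathrm{sh}\,\lambda\varphi-C_4(\rho)\,\mathrm{ch}\,\lambda\varphi .$$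
   Context: Work in $\mathbb R^4$ with Galilean (Cartesian) coordinates $x^1,x^2,x^3,x^4$ of Minkowski space (metric $\mathrm{diag}(-1,-1,-1,1)$). A potential on an open set $U\subseteq\mathbb R^4$ is a smooth covector field $A=A_i\,dx^i$; its components $A_i$ are always those with respect to the coordinates $x^i$, even when written as functions of other variables. For a vector field $\xi=\xi^k\partial_k$ the Lie derivative is $(L_\xi A)_i=\xi^k\partial_kA_i+A_k\partial_i\xi^k$. The vector fields used are, by components $(\xi^1,\xi^2,\xi^3,\xi^4)$: $e_1=(1,0,0,0)$, $e_2=(0,1,0,0)$, $e_3=(0,0,1,0)$, $e_4=(0,0,0,1)$, $e_{12}=(-x^2,x^1,0,0)$, $e_{13}=(x^3,0,-x^1,0)$, $e_{23}=(0,-x^3,x^2,0)$, $e_{14}=(x^4,0,0,x^1)$, $e_{24}=(0,x^4,0,x^2)$, $e_{34}=(0,0,x^4,x^3)$. A potential admits a family of vector fields if $L_\xi A=0$ for each $\xi$ in it (equivalently for every element of their linear span). "Functions" are smooth real functions; $\mathrm{ch}=\cosh$, $\mathrm{sh}=\sinh$. *)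

theory Defs
  imports "HOL-Analysis.Analysis"
begin

text \<open>A covector field A is a map real^4 => real^4,
  A x $ i being the component A_i at x; a vector field xi likewise gives xi^k.\<close>

primrec Ck_on :: "nat \<Rightarrow> 'a::real_normed_vector set \<Rightarrow> ('a \<Rightarrow> 'b::real_normed_vector) \<Rightarrow> bool" where
  "Ck_on 0 U f = continuous_on U f"
| "Ck_on (Suc k) U f = (f differentiable_on U \<and>
      (\<forall>v. Ck_on k U (\<lambda>x. frechet_derivative f (at x) v)))"

definition smooth_on :: "'a::real_normed_vector set \<Rightarrow> ('a \<Rightarrow> 'b::real_normed_vector) \<Rightarrow> bool" where
  "smooth_on U f \<longleftrightarrow> (\<forall>k. Ck_on k U f)"

definition pd :: "4 \<Rightarrow> (real^4 \<Rightarrow> real) \<Rightarrow> real^4 \<Rightarrow> real" where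
  "pd k f x = frechet_derivative f (at x) (axis k 1)"

definition lie_deriv :: "(real^4 \<Rightarrow> real^4) \<Rightarrow> (real^4 \<Rightarrow> real^4) \<Rightarrow> real^4 \<Rightarrow> real^4" where
  "lie_deriv xi A x = (\<chi> i. (\<Sum>k\<in>UNIV. xi x $ k * pd k (\<lambda>y. A y $ i) x)
                          + (\<Sum>k\<in>UNIV. A x $ k * pd i (\<lambda>y. xi y $ k) x))"

definition e1 :: "real^4 \<Rightarrow> real^4" where "e1 x = vector [1, 0, 0, 0]"
definition e2 :: "real^4 \<Rightarrow> real^4" where "e2 x = vector [0, 1, 0, 0]"
definition e3 :: "real^4 \<Rightarrow> real^4" where "e3 x = vector [0, 0, 1, 0]"
definition e4 :: "real^4 \<Rightarrow> real^4" where "e4 x = vector [0, 0, 0, 1]"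
definition e12 :: "real^4 \<Rightarrow> real^4" where "e12 x = vector [- x$2, x$1, 0, 0]"
definition e13 :: "real^4 \<Rightarrow> real^4" where "e13 x = vector [x$3, 0, - x$1, 0]"
definition e23 :: "real^4 \<Rightarrow> real^4" where "e23 x = vector [0, - x$3, x$2, 0]"
definition e14 :: "real^4 \<Rightarrow> real^4" where "e14 x = vector [x$4, 0, 0, x$1]"
definition e24 :: "real^4 \<Rightarrow> real^4" where "e24 x = vector [0, x$4, 0, x$2]"
definition e34 :: "real^4 \<Rightarrow> real^4" where "e34 x = vector [0, 0, x$4, x$3]"

definition admits :: "(real^4) set \<Rightarrow> (real^4 \<Rightarrow> real^4) \<Rightarrow> ((real^4) \<Rightarrow> (real^4)) set \<Rightarrow> bool" where
  "admits U A F \<longleftrightarrow> (\<forall>xi\<in>F. \<forall>x\<in>U. lie_deriv xi A x = 0)"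

end

theory Submission
  imports Defs
begin



lemma vector_4 [simp]:
 "(vector [a,b,c,d] ::('a::zero)^4)$1 = a"
 "(vector [a,b,c,d] ::('a::zero)^4)$2 = b"
 "(vector [a,b,c,d] ::('a::zero)^4)$3 = c"
 "(vector [a,b,c,d] ::('a::zero)^4)$4 = d"
  unfolding vector_def by simp_all

lemma Ck_cong:
  assumes "open V" "Ck_on k V g" "\<And>x. x \<in> V \<Longrightarrow> g x = h x"
  shows "Ck_on k V h"
  using assms(2,3)
proof (induction k arbitrary: g h)
  case 0
  then show ?case using continuous_on_cong by force
next
  case (Suc k)
  have dg: "\<forall>x\<in>V. g differentiable at x"
    using Suc.prems(1) assms(1) by (simp add: differentiable_on_eq_differentiable_at)
  have fd: "frechet_derivative g (at x) = frechet_derivative h (at x)" if "x \<in> V" for x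
  proof -
    have "(g has_derivative frechet_derivative g (at x)) (at x)"
      using dg that frechet_derivative_works by blast
    then have "(h has_derivative frechet_derivative g (at x)) (at x)"
      using has_derivative_transform_within_open[OF _ assms(1) that] Suc.prems(2) by blast
    then show ?thesis using frechet_derivative_at by metis
  qed
  have "h differentiable_on V"
    unfolding differentiable_on_eq_differentiable_at[OF assms(1)]
  proof
    fix x assume x: "x \<in> V"
    then have "(g has_derivative frechet_derivative g (at x)) (at x)"
      using dg frechet_derivative_works by blast
    then have "(h has_derivative frechet_derivative g (at x)) (at x)"
      using has_derivative_transform_within_open[OF _ assms(1) x] Suc.prems(2) by blast
    then show "h differentiable at x" unfolding differentiable_def by blast
  qed
  moreover have "Ck_on k V (\<lambda>x. frechet_derivative h (at x) v)" for v
    using Suc.IH[of "\<lambda>x. frechet_derivative g (at x) v"] Suc.prems fd by simp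
  ultimately show ?case by simp
qed

lemma Ck_comp_lin:
  assumes "open U" "open V" "bounded_linear L" "L ` V \<subseteq> U"
  shows "Ck_on k U f \<Longrightarrow> Ck_on k V (\<lambda>x. f (L x))"
proof (induction k arbitrary: f)
  case 0
  then show ?case using assms
    using continuous_on_compose2[of U f V L, OF _ linear_continuous_on[OF assms(3)]] by simp
next
  case (Suc k)
  have df: "\<forall>y\<in>U. f differentiable at y"
    using Suc.prems assms(1) by (simp add: differentiable_on_eq_differentiable_at)
  have hd: "((\<lambda>x. f (L x)) has_derivative (\<lambda>v. frechet_derivative f (at (L x)) (L v))) (at x)"
    if "x \<in> V" for x
  proof -
    have "(f has_derivative frechet_derivative f (at (L x))) (at (L x))"
      using df that assms(4) frechet_derivative_works by blast
    from diff_chain_at[OF bounded_linear_imp_has_derivative[OF assms(3)] this]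
    show ?thesis by (simp add: o_def)
  qed
  have "(\<lambda>x. f (L x)) differentiable_on V"
    unfolding differentiable_on_eq_differentiable_at[OF assms(2)]
    using hd differentiable_def by blast
  moreover have "Ck_on k V (\<lambda>x. frechet_derivative (\<lambda>x. f (L x)) (at x) v)" for v
  proof -
    have "Ck_on k V (\<lambda>x. frechet_derivative f (at (L x)) (L v))"
      using Suc.IH[of "\<lambda>y. frechet_derivative f (at y) (L v)"] Suc.prems by simp
    then show ?thesis
      by (rule Ck_cong[OF assms(2)]) (metis hd frechet_derivative_at)
  qed
  ultimately show ?case by simp
qed

lemma Ck_lin_comp:
  assumes "open U" "bounded_linear P"
  shows "Ck_on k U f \<Longrightarrow> Ck_on k U (\<lambda>x. P (f x))"
proof (induction k arbitrary: f)
  case 0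
  then show ?case using assms
    using continuous_on_compose2[of UNIV P U f, OF linear_continuous_on[OF assms(2)]] by simp
next
  case (Suc k)
  have df: "\<forall>y\<in>U. f differentiable at y"
    using Suc.prems assms(1) by (simp add: differentiable_on_eq_differentiable_at)
  have hd: "((\<lambda>x. P (f x)) has_derivative (\<lambda>v. P (frechet_derivative f (at x) v))) (at x)"
    if "x \<in> U" for x
  proof -
    have "(f has_derivative frechet_derivative f (at x)) (at x)"
      using df that frechet_derivative_works by blast
    from diff_chain_at[OF this bounded_linear_imp_has_derivative[OF assms(2)]]
    show ?thesis by (simp add: o_def)
  qed
  have "(\<lambda>x. P (f x)) differentiable_on U"
    unfolding differentiable_on_eq_differentiable_at[OF assms(1)]
    using hd differentiable_def by blast
  moreover have "Ck_on k U (\<lambda>x. frechet_derivative (\<lambda>x. P (f x)) (at x) v)" for v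
  proof -
    have "Ck_on k U (\<lambda>x. P (frechet_derivative f (at x) v))"
      using Suc.IH[of "\<lambda>y. frechet_derivative f (at y) v"] Suc.prems by simp
    then show ?thesis
      by (rule Ck_cong[OF assms(1)]) (metis hd frechet_derivative_at)
  qed
  ultimately show ?case by simp
qed




lemma pd_comp:
  assumes "(A has_derivative D) (at x)"
  shows "pd k (\<lambda>y. A y $ i) x = D (axis k 1) $ i"
proof -
  have "((\<lambda>y. A y $ i) has_derivative (\<lambda>v. D v $ i)) (at x)"
    using bounded_linear.has_derivative[OF bounded_linear_vec_nth assms] .
  then show ?thesis unfolding pd_def using frechet_derivative_at by metis
qed

lemma pd_lin:
  assumes "bounded_linear L"
  shows "pd i (\<lambda>y. L y $ k) x = L (axis i 1) $ k"
proof -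
  have "((\<lambda>y. L y $ k) has_derivative (\<lambda>v. L v $ k)) (at x)"
    using bounded_linear.has_derivative[OF bounded_linear_vec_nth bounded_linear_imp_has_derivative[OF assms]] .
  then show ?thesis unfolding pd_def using frechet_derivative_at by metis
qed

lemma pd_const: "pd i (\<lambda>y. c $ k) x = 0"
proof -
  have "((\<lambda>y. c $ k) has_derivative (\<lambda>v. 0)) (at x)" by simp
  then show ?thesis unfolding pd_def using frechet_derivative_at by metis
qed

lemma basis_exp4: "(\<Sum>k\<in>UNIV. (v::real^4) $ k *\<^sub>R axis k 1) = v"
  using basis_expansion[of v] by (simp add: scalar_mult_eq_scaleR)

lemma sum_D:
  assumes "linear D"
  shows "(\<Sum>k\<in>UNIV. (v::real^4) $ k * D (axis k 1) $ i) = D v $ i"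
proof -
  have "(\<Sum>k\<in>UNIV. v $ k * D (axis k 1) $ i) = (\<Sum>k\<in>UNIV. v $ k *\<^sub>R D (axis k 1)) $ i"
    by (simp add: sum_component)
  also have "(\<Sum>k\<in>UNIV. v $ k *\<^sub>R D (axis k 1)) = D (\<Sum>k\<in>UNIV. v $ k *\<^sub>R axis k 1)"
    using assms by (simp add: linear_sum linear_scale)
  finally show ?thesis by (simp add: basis_exp4)
qed

lemma lie_lin:
  assumes "(A has_derivative D) (at x)" "bounded_linear L"
  shows "lie_deriv L A x = D (L x) + (\<chi> i. \<Sum>k\<in>UNIV. A x $ k * L (axis i 1) $ k)"
proof -
  have "linear D" using assms(1) has_derivative_linear by blast
  then show ?thesis
    unfolding lie_deriv_def vec_eq_iff
    by (simp add: pd_comp[OF assms(1)] pd_lin[OF assms(2)] sum_D)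
qed

lemma lie_const:
  assumes "(A has_derivative D) (at x)"
  shows "lie_deriv (\<lambda>_. c) A x = D c"
proof -
  have "linear D" using assms(1) has_derivative_linear by blast
  then show ?thesis
    unfolding lie_deriv_def vec_eq_iff
    by (simp add: pd_comp[OF assms(1)] pd_const sum_D)
qed




lemma tanh_artanh_real:
  fixes u :: real assumes "\<bar>u\<bar> < 1" shows "tanh (artanh u) = u"
proof -
  define r where "r = (1 + u) / (1 - u)"
  have r: "r > 0" using assms unfolding r_def by (auto simp: abs_less_iff)
  have "exp (- 2 * artanh u) = 1 / r"
    unfolding artanh_def r_def[symmetric] using r by (simp add: exp_minus exp_ln inverse_eq_divide)
  then have "tanh (artanh u) = (1 - 1/r) / (1 + 1/r)" by (simp add: tanh_real_altdef)
  also have "\<dots> = u" using assms r unfolding r_def by (auto simp: field_simps abs_less_iff)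
  finally show ?thesis .
qed

lemma cosh_gt_abs_sinh: "\<bar>sinh t\<bar> < cosh (t::real)"
proof -
  have "(sinh t)\<^sup>2 < (cosh t)\<^sup>2" by (simp add: cosh_square_eq)
  then have "\<bar>sinh t\<bar>\<^sup>2 < (cosh t)\<^sup>2" by simp
  then show ?thesis using power_less_imp_less_base[of "\<bar>sinh t\<bar>" 2 "cosh t"] by (simp add: less_imp_le)
qed

lemma hyp_param:
  fixes x2 x4 :: real
  assumes "x2 > \<bar>x4\<bar>"
  shows "sqrt (x2\<^sup>2 - x4\<^sup>2) * cosh (artanh (x4/x2)) = x2"
    and "sqrt (x2\<^sup>2 - x4\<^sup>2) * sinh (artanh (x4/x2)) = x4"
proof -
  define u where "u = x4 / x2"
  define a where "a = artanh u"
  have x2: "x2 > 0" using assms by linarith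
  have u: "\<bar>u\<bar> < 1"
  proof -
    have "\<bar>u\<bar> = \<bar>x4\<bar> / x2" unfolding u_def using x2 by simp
    also have "\<dots> < 1" using assms x2 by simp
    finally show ?thesis .
  qed
  have cpos: "cosh a > 0" by simp
  have s: "sinh a = u * cosh a"
    using tanh_artanh_real[OF u] cpos unfolding a_def[symmetric] tanh_def by (simp add: field_simps)
  have s2: "(sinh a)\<^sup>2 = u\<^sup>2 * (cosh a)\<^sup>2" unfolding s by (simp add: power_mult_distrib)
  have c2: "(cosh a)\<^sup>2 * (1 - u\<^sup>2) = 1"
  proof -
    have "(cosh a)\<^sup>2 * (1 - u\<^sup>2) = (cosh a)\<^sup>2 - u\<^sup>2 * (cosh a)\<^sup>2" by (simp add: algebra_simps)
    then show ?thesis using cosh_square_eq[of a] s2 by linarith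
  qed
  have xu: "x2\<^sup>2 * u\<^sup>2 = x4\<^sup>2" using x2 unfolding u_def by (simp add: power_divide)
  have rho: "x2\<^sup>2 - x4\<^sup>2 = x2\<^sup>2 * (1 - u\<^sup>2)" using xu by (simp add: algebra_simps)
  have lt: "\<bar>x4\<bar>\<^sup>2 < x2\<^sup>2" by (rule power_strict_mono) (use assms in auto)
  have nn: "x2\<^sup>2 - x4\<^sup>2 \<ge> 0" using lt by simp
  have "(sqrt (x2\<^sup>2 - x4\<^sup>2) * cosh a)\<^sup>2 = x2\<^sup>2"
  proof -
    have "(sqrt (x2\<^sup>2 - x4\<^sup>2) * cosh a)\<^sup>2 = (x2\<^sup>2 - x4\<^sup>2) * (cosh a)\<^sup>2"
      using nn by (simp add: power_mult_distrib)
    also have "\<dots> = x2\<^sup>2 * ((cosh a)\<^sup>2 * (1 - u\<^sup>2))" unfolding rho by (simp only: ac_simps)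
    also have "\<dots> = x2\<^sup>2" using c2 by simp
    finally show ?thesis .
  qed
  moreover have "sqrt (x2\<^sup>2 - x4\<^sup>2) * cosh a \<ge> 0" using cpos nn by (simp add: less_imp_le)
  ultimately have 1: "sqrt (x2\<^sup>2 - x4\<^sup>2) * cosh a = x2" using x2
    by (metis less_imp_le power2_eq_iff_nonneg)
  then show "sqrt (x2\<^sup>2 - x4\<^sup>2) * cosh (artanh (x4/x2)) = x2" unfolding a_def u_def .
  have "sqrt (x2\<^sup>2 - x4\<^sup>2) * sinh a = u * (sqrt (x2\<^sup>2 - x4\<^sup>2) * cosh a)" using s by (simp only: ac_simps)
  also have "\<dots> = u * x2" using 1 by simp
  finally have "sqrt (x2\<^sup>2 - x4\<^sup>2) * sinh a = u * x2" .
  then show "sqrt (x2\<^sup>2 - x4\<^sup>2) * sinh (artanh (x4/x2)) = x4" unfolding a_def u_def using x2 by simp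
qed

lemma curve_params:
  fixes r b :: real assumes "r > 0"
  shows "sqrt ((r * cosh b)\<^sup>2 - (r * sinh b)\<^sup>2) = r"
    and "artanh ((r * sinh b) / (r * cosh b)) = b"
proof -
  have "(r * cosh b)\<^sup>2 - (r * sinh b)\<^sup>2 = r\<^sup>2"
    by (simp add: power_mult_distrib cosh_square_eq algebra_simps)
  then show "sqrt ((r * cosh b)\<^sup>2 - (r * sinh b)\<^sup>2) = r" using assms by simp
  have "(r * sinh b) / (r * cosh b) = tanh b" using assms by (simp add: tanh_def)
  then show "artanh ((r * sinh b) / (r * cosh b)) = b" by (simp add: artanh_tanh_real)
qed

lemma vec4_axis: "(vector[a,b,c,d] :: real^4) = a *\<^sub>R axis 1 1 + b *\<^sub>R axis 2 1 + c *\<^sub>R axis 3 1 + d *\<^sub>R axis 4 1"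
  unfolding vec_eq_iff forall_4 by (simp add: axis_def vector_def)

lemma curve_deriv:
  assumes "(f1 has_real_derivative d1) (at t)" "(f2 has_real_derivative d2) (at t)"
    "(f3 has_real_derivative d3) (at t)" "(f4 has_real_derivative d4) (at t)"
  shows "((\<lambda>s. vector[f1 s, f2 s, f3 s, f4 s] :: real^4) has_vector_derivative vector[d1,d2,d3,d4]) (at t)"
  unfolding vec4_axis
  by (auto intro!: derivative_eq_intros assms)

lemma chain_comp:
  assumes "(A has_derivative D) (at (g t))" "(g has_vector_derivative g') (at t)"
  shows "((\<lambda>s. A (g s) $ i) has_real_derivative (D g' $ i)) (at t)"
proof -
  have lin: "linear D" using assms(1) has_derivative_linear by blast
  have "(g has_derivative (\<lambda>h. h *\<^sub>R g')) (at t)" using assms(2) by (simp add: has_vector_derivative_def)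
  from diff_chain_at[OF this assms(1)]
  have "((\<lambda>s. A (g s)) has_derivative (\<lambda>h. D (h *\<^sub>R g'))) (at t)" by (simp add: o_def)
  from bounded_linear.has_derivative[OF bounded_linear_vec_nth this]
  have "((\<lambda>s. A (g s) $ i) has_derivative (\<lambda>h. D (h *\<^sub>R g') $ i)) (at t)" .
  moreover have "(\<lambda>h. D (h *\<^sub>R g') $ i) = (*) (D g' $ i)"
    by (rule ext) (simp add: linear_scale[OF lin])
  ultimately show ?thesis by (simp add: has_field_derivative_def)
qed




lemma rot_inv:
  fixes uu vv cc ss P Q :: real
  assumes "cc\<^sup>2 + ss\<^sup>2 = 1" "P = uu* cc - vv* ss" "Q = uu* ss + vv* cc"
  shows "uu = P* cc + Q* ss" "vv = -P* ss + Q* cc"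
proof -
  have "P* cc + Q* ss = uu*(cc\<^sup>2 + ss\<^sup>2)" by (simp add: assms(2,3) algebra_simps power2_eq_square)
  then show "uu = P* cc + Q* ss" using assms(1) by simp
  have "-P* ss + Q* cc = vv*(cc\<^sup>2 + ss\<^sup>2)" by (simp add: assms(2,3) algebra_simps power2_eq_square)
  then show "vv = -P* ss + Q* cc" using assms(1) by simp
qed

lemma hyp_inv:
  fixes uu vv cc ss R S :: real
  assumes "cc\<^sup>2 - ss\<^sup>2 = 1" "R = uu* cc + vv* ss" "S = uu* ss + vv* cc"
  shows "uu = R* cc - S* ss" "vv = -R* ss + S* cc"
proof -
  have "R* cc - S* ss = uu*(cc\<^sup>2 - ss\<^sup>2)" by (simp add: assms(2,3) algebra_simps power2_eq_square)
  then show "uu = R* cc - S* ss" using assms(1) by simp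
  have "-R* ss + S* cc = vv*(cc\<^sup>2 - ss\<^sup>2)" by (simp add: assms(2,3) algebra_simps power2_eq_square)
  then show "vv = -R* ss + S* cc" using assms(1) by simp
qed

lemma forward_dir:
  fixes lam :: real and A :: "real^4 \<Rightarrow> real^4" and U rho phi
  assumes U_def: "U = {x :: real^4. x$2 > \<bar>x$4\<bar>}"
    and rho_def: "rho = (\<lambda>x :: real^4. sqrt ((x$2)\<^sup>2 - (x$4)\<^sup>2))"
    and phi_def: "phi = (\<lambda>x :: real^4. artanh (x$4 / x$2) / lam)"
    and lam: "lam \<noteq> 0" and sm: "smooth_on U A"
    and dA: "\<And>y. y \<in> U \<Longrightarrow> (A has_derivative DA y) (at y)"
    and c1: "\<And>y. y \<in> U \<Longrightarrow> DA y (axis 1 1) = 0"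
    and c3: "\<And>y. y \<in> U \<Longrightarrow> DA y (axis 3 1) = 0"
    and cw: "\<And>y. y \<in> U \<Longrightarrow> DA y (vector[0, y$4, 0, y$2]) =
               vector[A y$3 / lam, - (A y$4), - (A y$1) / lam, - (A y$2)]"
  shows "\<exists>C1 C2 C3 C4 :: real \<Rightarrow> real.
       smooth_on {0<..} C1 \<and> smooth_on {0<..} C2 \<and> smooth_on {0<..} C3 \<and> smooth_on {0<..} C4 \<and>
       (\<forall>x\<in>U.
          A x $ 1 = C1 (rho x) * cos (phi x) + C2 (rho x) * sin (phi x) \<and>
          A x $ 2 = C3 (rho x) * cosh (lam * phi x) + C4 (rho x) * sinh (lam * phi x) \<and>
          A x $ 3 = - C1 (rho x) * sin (phi x) + C2 (rho x) * cos (phi x) \<and>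
          A x $ 4 = - C3 (rho x) * sinh (lam * phi x) - C4 (rho x) * cosh (lam * phi x))"
proof -
  have opn: "open U" unfolding U_def by (rule open_Collect_less) (auto intro!: continuous_intros)
  define b where "b r = r *\<^sub>R (axis 2 1 :: real^4)" for r :: real
  have blin: "bounded_linear b" unfolding b_def[abs_def] by (rule bounded_linear_scaleR_left)
  have bU: "b ` {0<..} \<subseteq> U" unfolding U_def b_def by (auto simp: axis_def)
  have smk: "Ck_on k U A" for k using sm unfolding smooth_on_def by blast
  have sAb: "Ck_on k {0<..} (\<lambda>r. A (b r))" for k
    by (rule Ck_comp_lin[OF opn _ blin bU smk]) simp
  define C1 where "C1 r = A (b r) $ 1" for r
  define C2 where "C2 r = A (b r) $ 3" for r
  define C3 where "C3 r = A (b r) $ 2" for r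
  define C4 where "C4 r = - (A (b r) $ 4)" for r
  have s1: "smooth_on {0<..} C1" unfolding smooth_on_def C1_def[abs_def]
    using Ck_lin_comp[OF _ bounded_linear_vec_nth sAb] by simp
  have s2: "smooth_on {0<..} C2" unfolding smooth_on_def C2_def[abs_def]
    using Ck_lin_comp[OF _ bounded_linear_vec_nth sAb] by simp
  have s3: "smooth_on {0<..} C3" unfolding smooth_on_def C3_def[abs_def]
    using Ck_lin_comp[OF _ bounded_linear_vec_nth sAb] by simp
  have s4: "smooth_on {0<..} C4" unfolding smooth_on_def C4_def[abs_def]
    using Ck_lin_comp[OF _ bounded_linear_minus[OF bounded_linear_vec_nth] sAb] by simp
  have main: "A x $ 1 = C1 (rho x) * cos (phi x) + C2 (rho x) * sin (phi x) \<and>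
          A x $ 2 = C3 (rho x) * cosh (lam * phi x) + C4 (rho x) * sinh (lam * phi x) \<and>
          A x $ 3 = - C1 (rho x) * sin (phi x) + C2 (rho x) * cos (phi x) \<and>
          A x $ 4 = - C3 (rho x) * sinh (lam * phi x) - C4 (rho x) * cosh (lam * phi x)"
    if x: "x \<in> U" for x
  proof -
    have x2: "x$2 > \<bar>x$4\<bar>" using x U_def by simp
    define r where "r = rho x"
    define a where "a = artanh (x$4 / x$2)"
    define p where "p = phi x"
    have pa: "p = a / lam" "lam * p = a" using lam by (simp_all add: p_def phi_def a_def)
    have rc: "r * cosh a = x$2" and rs: "r * sinh a = x$4"
      using hyp_param[OF x2] by (simp_all add: r_def rho_def a_def)
    have rpos: "r > 0"
    proof -
      have "r * cosh a > 0" using rc x2 by linarith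
      moreover have "cosh a > 0" by simp
      ultimately show ?thesis by (simp add: zero_less_mult_iff)
    qed
    define \<gamma> where "\<gamma> t = (vector[t * x$1, r * cosh (t*a), t * x$3, r * sinh (t*a)] :: real^4)" for t
    have \<gamma>U: "\<gamma> t \<in> U" for t
    proof -
      have "r * \<bar>sinh (t*a)\<bar> < r * cosh (t*a)"
        using cosh_gt_abs_sinh[of "t*a"] rpos by simp
      then show ?thesis unfolding U_def \<gamma>_def using rpos by (simp add: abs_mult)
    qed
    have \<gamma>0: "\<gamma> 0 = b r" by (simp add: \<gamma>_def b_def vec_eq_iff forall_4 axis_def)
    have \<gamma>1: "\<gamma> 1 = x" by (simp add: \<gamma>_def vec_eq_iff forall_4 rc rs)
    define gd where "gd t = (vector[x$1, r * (sinh (t*a) * a), x$3, r * (cosh (t*a) * a)] :: real^4)" for t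
    have \<gamma>d: "(\<gamma> has_vector_derivative gd t) (at t)" for t
      unfolding \<gamma>_def[abs_def] gd_def
      by (rule curve_deriv) (auto intro!: derivative_eq_intros)
    have gd': "gd t = x$1 *\<^sub>R axis 1 1 + x$3 *\<^sub>R axis 3 1 + a *\<^sub>R vector[0, \<gamma> t $4, 0, \<gamma> t $2]" for t
      by (simp add: vec_eq_iff forall_4 axis_def \<gamma>_def gd_def)
    have Dg: "DA (\<gamma> t) (gd t) = vector[p * A (\<gamma> t)$3, -(a * A (\<gamma> t)$4), -(p * A (\<gamma> t)$1), -(a * A (\<gamma> t)$2)]" for t
    proof -
      have lin: "linear (DA (\<gamma> t))" using dA[OF \<gamma>U] has_derivative_linear by blast
      have "DA (\<gamma> t) (gd t) = a *\<^sub>R DA (\<gamma> t) (vector[0, \<gamma> t $4, 0, \<gamma> t $2])"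
        unfolding gd' using c1[OF \<gamma>U] c3[OF \<gamma>U] by (simp add: linear_add[OF lin] linear_scale[OF lin])
      also have "\<dots> = vector[p * A (\<gamma> t)$3, -(a * A (\<gamma> t)$4), -(p * A (\<gamma> t)$1), -(a * A (\<gamma> t)$2)]"
        unfolding cw[OF \<gamma>U] using lam by (simp add: vec_eq_iff forall_4 pa)
      finally show ?thesis .
    qed
    have hg1: "((\<lambda>s. A (\<gamma> s) $ 1) has_real_derivative (p * A (\<gamma> t)$3)) (at t)" for t
      using chain_comp[OF dA[OF \<gamma>U[of t]] \<gamma>d[of t], where i=1] Dg by simp
    have hg2: "((\<lambda>s. A (\<gamma> s) $ 2) has_real_derivative (-(a * A (\<gamma> t)$4))) (at t)" for t
      using chain_comp[OF dA[OF \<gamma>U[of t]] \<gamma>d[of t], where i=2] Dg by simp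
    have hg3: "((\<lambda>s. A (\<gamma> s) $ 3) has_real_derivative (-(p * A (\<gamma> t)$1))) (at t)" for t
      using chain_comp[OF dA[OF \<gamma>U[of t]] \<gamma>d[of t], where i=3] Dg by simp
    have hg4: "((\<lambda>s. A (\<gamma> s) $ 4) has_real_derivative (-(a * A (\<gamma> t)$2))) (at t)" for t
      using chain_comp[OF dA[OF \<gamma>U[of t]] \<gamma>d[of t], where i=4] Dg by simp
    define P where "P t = A (\<gamma> t)$1 * cos (t*p) - A (\<gamma> t)$3 * sin (t*p)" for t
    define Q where "Q t = A (\<gamma> t)$1 * sin (t*p) + A (\<gamma> t)$3 * cos (t*p)" for t
    define R where "R t = A (\<gamma> t)$2 * cosh (t*a) + A (\<gamma> t)$4 * sinh (t*a)" for t
    define S where "S t = A (\<gamma> t)$2 * sinh (t*a) + A (\<gamma> t)$4 * cosh (t*a)" for t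
    have "\<forall>t. (P has_real_derivative 0) (at t)" unfolding P_def[abs_def]
      by (auto intro!: derivative_eq_intros hg1 hg3 simp: algebra_simps)
    then have P: "P 1 = P 0" by (rule DERIV_isconst_all)
    have "\<forall>t. (Q has_real_derivative 0) (at t)" unfolding Q_def[abs_def]
      by (auto intro!: derivative_eq_intros hg1 hg3 simp: algebra_simps)
    then have Q: "Q 1 = Q 0" by (rule DERIV_isconst_all)
    have "\<forall>t. (R has_real_derivative 0) (at t)" unfolding R_def[abs_def]
      by (auto intro!: derivative_eq_intros hg2 hg4 simp: algebra_simps)
    then have R: "R 1 = R 0" by (rule DERIV_isconst_all)
    have "\<forall>t. (S has_real_derivative 0) (at t)" unfolding S_def[abs_def]
      by (auto intro!: derivative_eq_intros hg2 hg4 simp: algebra_simps)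
    then have S: "S 1 = S 0" by (rule DERIV_isconst_all)
    have e1: "C1 r = A x $1 * cos p - A x $3 * sin p" using P unfolding P_def C1_def \<gamma>0 \<gamma>1 by simp
    have e2: "C2 r = A x $1 * sin p + A x $3 * cos p" using Q unfolding Q_def C2_def \<gamma>0 \<gamma>1 by simp
    have e3: "C3 r = A x $2 * cosh a + A x $4 * sinh a" using R unfolding R_def C3_def \<gamma>0 \<gamma>1 by simp
    have e4: "- C4 r = A x $2 * sinh a + A x $4 * cosh a" using S unfolding S_def C4_def \<gamma>0 \<gamma>1 by simp
    note r1 = rot_inv[OF sin_cos_squared_add2 e1 e2]
    have ch: "(cosh a)\<^sup>2 - (sinh a)\<^sup>2 = 1" by (simp add: cosh_square_eq)
    note h1 = hyp_inv[OF ch e3 e4]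
    show ?thesis unfolding r_def[symmetric] p_def[symmetric] pa(2)
      using r1 h1 by (simp add: algebra_simps)
  qed
  show ?thesis using s1 s2 s3 s4 main by blast
qed



lemma deriv_along:
  assumes "(A has_derivative D) (at (c 0))" "(c has_vector_derivative v) (at 0)"
    "\<And>s. A (c s) $ i = f s" "(f has_real_derivative d) (at 0)"
  shows "D v $ i = d"
proof -
  have "((\<lambda>s. A (c s) $ i) has_real_derivative D v $ i) (at 0)" by (rule chain_comp[OF assms(1,2)])
  then have "(f has_real_derivative D v $ i) (at 0)" using assms(3) by simp
  then show ?thesis using assms(4) DERIV_unique by blast
qed

lemma backward_dir:
  fixes lam :: real and A :: "real^4 \<Rightarrow> real^4" and U rho phi and C1 C2 C3 C4 :: "real \<Rightarrow> real"
  assumes U_def: "U = {x :: real^4. x$2 > \<bar>x$4\<bar>}"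
    and rho_def: "rho = (\<lambda>x :: real^4. sqrt ((x$2)\<^sup>2 - (x$4)\<^sup>2))"
    and phi_def: "phi = (\<lambda>x :: real^4. artanh (x$4 / x$2) / lam)"
    and lam: "lam \<noteq> 0"
    and dA: "\<And>y. y \<in> U \<Longrightarrow> (A has_derivative DA y) (at y)"
    and Cs: "\<forall>x\<in>U.
          A x $ 1 = C1 (rho x) * cos (phi x) + C2 (rho x) * sin (phi x) \<and>
          A x $ 2 = C3 (rho x) * cosh (lam * phi x) + C4 (rho x) * sinh (lam * phi x) \<and>
          A x $ 3 = - C1 (rho x) * sin (phi x) + C2 (rho x) * cos (phi x) \<and>
          A x $ 4 = - C3 (rho x) * sinh (lam * phi x) - C4 (rho x) * cosh (lam * phi x)"
    and y: "y \<in> U"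
  shows "DA y (axis 1 1) = 0 \<and> DA y (axis 3 1) = 0 \<and> DA y (vector[0, y$4, 0, y$2]) =
               vector[A y$3 / lam, - (A y$4), - (A y$1) / lam, - (A y$2)]"
proof -
  define F where "F z = (vector[C1 (rho z) * cos (phi z) + C2 (rho z) * sin (phi z),
     C3 (rho z) * cosh (lam * phi z) + C4 (rho z) * sinh (lam * phi z),
     - C1 (rho z) * sin (phi z) + C2 (rho z) * cos (phi z),
     - C3 (rho z) * sinh (lam * phi z) - C4 (rho z) * cosh (lam * phi z)] :: real^4)" for z
  have AF: "A z = F z" if "z \<in> U" for z
    using Cs that by (simp add: vec_eq_iff forall_4 F_def)
  have y2: "y$2 > \<bar>y$4\<bar>" using y U_def by simp
  have ax: "DA y (axis k 1) = 0" if k: "k = 1 \<or> k = 3" for k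
  proof -
    define c where "c s = y + s *\<^sub>R axis k 1" for s
    have cU: "c s \<in> U" for s using y k unfolding U_def c_def by (auto simp: axis_def)
    have c0: "c 0 = y" by (simp add: c_def)
    have cd: "(c has_vector_derivative axis k 1) (at 0)" unfolding c_def[abs_def]
      by (auto intro!: derivative_eq_intros)
    have Fc: "F (c s) = F y" for s using k unfolding F_def rho_def phi_def c_def by (auto simp: axis_def)
    have "DA y (axis k 1) $ i = 0" for i
    proof (rule deriv_along[where A=A and c=c and D="DA y" and v="axis k 1" and f="\<lambda>s. A y $ i"])
      show "(A has_derivative DA y) (at (c 0))" using dA[OF y] c0 by simp
      show "(c has_vector_derivative axis k 1) (at 0)" by (rule cd)
      show "A (c s) $ i = A y $ i" for s using AF[OF cU] AF[OF y] Fc by simp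
      show "((\<lambda>s. A y $ i) has_real_derivative 0) (at 0)" by simp
    qed
    then show ?thesis by (simp add: vec_eq_iff)
  qed
  define r where "r = rho y"
  define a where "a = artanh (y$4 / y$2)"
  have rc: "r * cosh a = y$2" and rs: "r * sinh a = y$4"
    using hyp_param[OF y2] by (simp_all add: r_def rho_def a_def)
  have rpos: "r > 0"
  proof -
    have "r * cosh a > 0" using rc y2 by linarith
    moreover have "cosh a > 0" by simp
    ultimately show ?thesis by (simp add: zero_less_mult_iff)
  qed
  have py: "phi y = a / lam" "lam * phi y = a" using lam by (simp_all add: phi_def a_def)
  define c where "c s = (vector[y$1, r * cosh (a + s), y$3, r * sinh (a + s)] :: real^4)" for s
  have cU: "c s \<in> U" for s
  proof -
    have "r * \<bar>sinh (a + s)\<bar> < r * cosh (a + s)"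
      using cosh_gt_abs_sinh[of "a + s"] rpos by simp
    then show ?thesis unfolding U_def c_def using rpos by (simp add: abs_mult)
  qed
  have c0: "c 0 = y" by (simp add: c_def vec_eq_iff forall_4 rc rs)
  have cd: "(c has_vector_derivative vector[0, y$4, 0, y$2]) (at 0)"
    unfolding c_def[abs_def]
    by (rule curve_deriv) (auto intro!: derivative_eq_intros simp: rc[symmetric] rs[symmetric] mult.commute)
  have rhoc: "rho (c s) = r" for s using curve_params(1)[OF rpos] by (simp add: rho_def c_def)
  have phic: "phi (c s) = (a + s) / lam" for s using curve_params(2)[OF rpos] by (simp add: phi_def c_def)
  have lphic: "lam * phi (c s) = a + s" for s using lam by (simp add: phic)
  have Ac: "A (c s) = F (c s)" for s using AF[OF cU] .
  have Ay: "A y = F y" using AF[OF y] .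
  have dA0: "(A has_derivative DA y) (at (c 0))" using dA[OF y] c0 by simp
  have w1: "DA y (vector[0, y$4, 0, y$2]) $ 1 = A y $ 3 / lam"
  proof (rule deriv_along[OF dA0 cd])
    show "A (c s) $ 1 = C1 r * cos ((a + s) / lam) + C2 r * sin ((a + s) / lam)" for s
      by (simp add: Ac F_def rhoc phic)
    show "((\<lambda>s. C1 r * cos ((a + s) / lam) + C2 r * sin ((a + s) / lam)) has_real_derivative A y $ 3 / lam) (at 0)"
      by (auto intro!: derivative_eq_intros simp: Ay F_def py r_def[symmetric] field_simps lam)
  qed
  have w2: "DA y (vector[0, y$4, 0, y$2]) $ 2 = - (A y $ 4)"
  proof (rule deriv_along[OF dA0 cd])
    show "A (c s) $ 2 = C3 r * cosh (a + s) + C4 r * sinh (a + s)" for s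
      by (simp add: Ac F_def rhoc lphic)
    show "((\<lambda>s. C3 r * cosh (a + s) + C4 r * sinh (a + s)) has_real_derivative - (A y $ 4)) (at 0)"
      by (auto intro!: derivative_eq_intros simp: Ay F_def py r_def[symmetric] field_simps lam)
  qed
  have w3: "DA y (vector[0, y$4, 0, y$2]) $ 3 = - (A y $ 1) / lam"
  proof (rule deriv_along[OF dA0 cd])
    show "A (c s) $ 3 = - C1 r * sin ((a + s) / lam) + C2 r * cos ((a + s) / lam)" for s
      by (simp add: Ac F_def rhoc phic)
    show "((\<lambda>s. - C1 r * sin ((a + s) / lam) + C2 r * cos ((a + s) / lam)) has_real_derivative - (A y $ 1) / lam) (at 0)"
      by (auto intro!: derivative_eq_intros simp: Ay F_def py r_def[symmetric] field_simps lam)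
  qed
  have w4: "DA y (vector[0, y$4, 0, y$2]) $ 4 = - (A y $ 2)"
  proof (rule deriv_along[OF dA0 cd])
    show "A (c s) $ 4 = - C3 r * sinh (a + s) - C4 r * cosh (a + s)" for s
      by (simp add: Ac F_def rhoc lphic)
    show "((\<lambda>s. - C3 r * sinh (a + s) - C4 r * cosh (a + s)) has_real_derivative - (A y $ 2)) (at 0)"
      by (auto intro!: derivative_eq_intros simp: Ay F_def py r_def[symmetric] field_simps lam)
  qed
  show ?thesis using ax w1 w2 w3 w4 by (simp add: vec_eq_iff forall_4)
qed


theorem mainTheorem7:
  fixes lam :: real and A :: "real^4 \<Rightarrow> real^4"
  defines "U \<equiv> {x :: real^4. x$2 > \<bar>x$4\<bar>}"
  defines "rho \<equiv> (\<lambda>x :: real^4. sqrt ((x$2)\<^sup>2 - (x$4)\<^sup>2))"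
  defines "phi \<equiv> (\<lambda>x :: real^4. artanh (x$4 / x$2) / lam)"
  assumes "lam \<noteq> 0"
    and "smooth_on U A"
  shows "admits U A {(\<lambda>x. e13 x + lam *\<^sub>R e24 x), e1, e3} \<longleftrightarrow>
    (\<exists>C1 C2 C3 C4 :: real \<Rightarrow> real.
       smooth_on {0<..} C1 \<and> smooth_on {0<..} C2 \<and> smooth_on {0<..} C3 \<and> smooth_on {0<..} C4 \<and>
       (\<forall>x\<in>U.
          A x $ 1 = C1 (rho x) * cos (phi x) + C2 (rho x) * sin (phi x) \<and>
          A x $ 2 = C3 (rho x) * cosh (lam * phi x) + C4 (rho x) * sinh (lam * phi x) \<and>
          A x $ 3 = - C1 (rho x) * sin (phi x) + C2 (rho x) * cos (phi x) \<and>
          A x $ 4 = - C3 (rho x) * sinh (lam * phi x) - C4 (rho x) * cosh (lam * phi x)))"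
proof -
  have lam: "lam \<noteq> 0" by fact
  have sm: "smooth_on U A" by fact
  have Ud: "U = {x :: real^4. x$2 > \<bar>x$4\<bar>}" using U_def by simp
  have rd: "rho = (\<lambda>x :: real^4. sqrt ((x$2)\<^sup>2 - (x$4)\<^sup>2))" using rho_def by simp
  have pd: "phi = (\<lambda>x :: real^4. artanh (x$4 / x$2) / lam)" using phi_def by simp
  have opn: "open U" unfolding Ud by (rule open_Collect_less) (auto intro!: continuous_intros)
  define DA where "DA y = frechet_derivative A (at y)" for y
  have dA: "(A has_derivative DA y) (at y)" if "y \<in> U" for y
  proof -
    have "Ck_on (Suc 0) U A" using sm unfolding smooth_on_def by blast
    then have "A differentiable_on U" by simp
    then have "A differentiable at y" using that opn by (simp add: differentiable_on_eq_differentiable_at)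
    then show ?thesis unfolding DA_def using frechet_derivative_works by blast
  qed
  define Lm where "Lm y = (vector[y$3, lam * y$4, - y$1, lam * y$2] :: real^4)" for y :: "real^4"
  have xi_eq: "(\<lambda>x. e13 x + lam *\<^sub>R e24 x) = Lm"
    by (rule ext) (simp add: vec_eq_iff forall_4 e13_def e24_def Lm_def)
  have e1_eq: "e1 = (\<lambda>_. axis 1 1)" by (rule ext) (simp add: vec_eq_iff forall_4 e1_def axis_def)
  have e3_eq: "e3 = (\<lambda>_. axis 3 1)" by (rule ext) (simp add: vec_eq_iff forall_4 e3_def axis_def)
  have Llin: "bounded_linear Lm"
  proof -
    have "linear Lm" by (rule linearI) (simp_all add: vec_eq_iff forall_4 Lm_def algebra_simps)
    then show ?thesis by (simp add: linear_conv_bounded_linear)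
  qed
  have Lsplit: "Lm y = y$3 *\<^sub>R axis 1 1 + lam *\<^sub>R vector[0, y$4, 0, y$2] - y$1 *\<^sub>R axis 3 1" for y
    by (simp add: vec_eq_iff forall_4 Lm_def axis_def)
  have corr: "(\<chi> i. \<Sum>k\<in>UNIV. A y $ k * Lm (axis i 1) $ k) = vector[-(A y$3), lam * A y$4, A y$1, lam * A y$2]" for y
    by (simp add: vec_eq_iff forall_4 sum_4 Lm_def axis_def)
  have cond_iff: "(lie_deriv (\<lambda>x. e13 x + lam *\<^sub>R e24 x) A y = 0 \<and> lie_deriv e1 A y = 0 \<and> lie_deriv e3 A y = 0) \<longleftrightarrow>
     (DA y (axis 1 1) = 0 \<and> DA y (axis 3 1) = 0 \<and> DA y (vector[0, y$4, 0, y$2]) =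
               vector[A y$3 / lam, - (A y$4), - (A y$1) / lam, - (A y$2)])" if y: "y \<in> U" for y
  proof -
    have lin: "linear (DA y)" using dA[OF y] has_derivative_linear by blast
    have l1: "lie_deriv e1 A y = DA y (axis 1 1)" unfolding e1_eq by (rule lie_const[OF dA[OF y]])
    have l3: "lie_deriv e3 A y = DA y (axis 3 1)" unfolding e3_eq by (rule lie_const[OF dA[OF y]])
    have lx: "lie_deriv (\<lambda>x. e13 x + lam *\<^sub>R e24 x) A y = y$3 *\<^sub>R DA y (axis 1 1) + lam *\<^sub>R DA y (vector[0,y$4,0,y$2])
        - y$1 *\<^sub>R DA y (axis 3 1) + vector[-(A y$3), lam * A y$4, A y$1, lam * A y$2]"
      unfolding xi_eq lie_lin[OF dA[OF y] Llin] corr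
      by (simp add: Lsplit linear_add[OF lin] linear_diff[OF lin] linear_scale[OF lin])
    have eqv: "lam *\<^sub>R w + vector[-(A y$3), lam * A y$4, A y$1, lam * A y$2] = 0 \<longleftrightarrow>
        w = vector[A y$3 / lam, - (A y$4), - (A y$1) / lam, - (A y$2)]" for w :: "real^4"
      apply (simp only: vec_eq_iff)
      apply (simp only: forall_4)
      using lam apply (auto simp: field_simps)
      by (metis add.commute distrib_left mult_eq_0_iff neg_eq_iff_add_eq_0)+
    show ?thesis
    proof
      assume H: "lie_deriv (\<lambda>x. e13 x + lam *\<^sub>R e24 x) A y = 0 \<and> lie_deriv e1 A y = 0 \<and> lie_deriv e3 A y = 0"
      then have a1: "DA y (axis 1 1) = 0" and a3: "DA y (axis 3 1) = 0" using l1 l3 by simp_all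
      have "lam *\<^sub>R DA y (vector[0,y$4,0,y$2]) + vector[-(A y$3), lam * A y$4, A y$1, lam * A y$2] = 0"
        using H lx a1 a3 by simp
      then show "DA y (axis 1 1) = 0 \<and> DA y (axis 3 1) = 0 \<and> DA y (vector[0, y$4, 0, y$2]) =
               vector[A y$3 / lam, - (A y$4), - (A y$1) / lam, - (A y$2)]"
        using eqv a1 a3 by blast
    next
      assume H: "DA y (axis 1 1) = 0 \<and> DA y (axis 3 1) = 0 \<and> DA y (vector[0, y$4, 0, y$2]) =
               vector[A y$3 / lam, - (A y$4), - (A y$1) / lam, - (A y$2)]"
      then have "lam *\<^sub>R DA y (vector[0,y$4,0,y$2]) + vector[-(A y$3), lam * A y$4, A y$1, lam * A y$2] = 0"
        using eqv by blast
      then show "lie_deriv (\<lambda>x. e13 x + lam *\<^sub>R e24 x) A y = 0 \<and> lie_deriv e1 A y = 0 \<and> lie_deriv e3 A y = 0"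
        using H lx l1 l3 by simp
    qed
  qed
  have adm: "admits U A {(\<lambda>x. e13 x + lam *\<^sub>R e24 x), e1, e3} \<longleftrightarrow>
     (\<forall>y\<in>U. DA y (axis 1 1) = 0 \<and> DA y (axis 3 1) = 0 \<and> DA y (vector[0, y$4, 0, y$2]) =
               vector[A y$3 / lam, - (A y$4), - (A y$1) / lam, - (A y$2)])"
  proof -
    have "admits U A {(\<lambda>x. e13 x + lam *\<^sub>R e24 x), e1, e3} \<longleftrightarrow>
      (\<forall>y\<in>U. lie_deriv (\<lambda>x. e13 x + lam *\<^sub>R e24 x) A y = 0 \<and> lie_deriv e1 A y = 0 \<and> lie_deriv e3 A y = 0)"
      unfolding admits_def by blast
    also have "\<dots> \<longleftrightarrow> (\<forall>y\<in>U. DA y (axis 1 1) = 0 \<and> DA y (axis 3 1) = 0 \<and> DA y (vector[0, y$4, 0, y$2]) =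
               vector[A y$3 / lam, - (A y$4), - (A y$1) / lam, - (A y$2)])"
      by (rule ball_cong[OF refl]) (rule cond_iff)
    finally show ?thesis .
  qed
  show ?thesis
  proof
    assume "admits U A {(\<lambda>x. e13 x + lam *\<^sub>R e24 x), e1, e3}"
    then have c: "\<forall>y\<in>U. DA y (axis 1 1) = 0 \<and> DA y (axis 3 1) = 0 \<and> DA y (vector[0, y$4, 0, y$2]) =
               vector[A y$3 / lam, - (A y$4), - (A y$1) / lam, - (A y$2)]" using adm by blast
    show "\<exists>C1 C2 C3 C4 :: real \<Rightarrow> real.
       smooth_on {0<..} C1 \<and> smooth_on {0<..} C2 \<and> smooth_on {0<..} C3 \<and> smooth_on {0<..} C4 \<and>
       (\<forall>x\<in>U.
          A x $ 1 = C1 (rho x) * cos (phi x) + C2 (rho x) * sin (phi x) \<and>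
          A x $ 2 = C3 (rho x) * cosh (lam * phi x) + C4 (rho x) * sinh (lam * phi x) \<and>
          A x $ 3 = - C1 (rho x) * sin (phi x) + C2 (rho x) * cos (phi x) \<and>
          A x $ 4 = - C3 (rho x) * sinh (lam * phi x) - C4 (rho x) * cosh (lam * phi x))"
      by (rule forward_dir[OF Ud rd pd lam sm dA]) (use c in auto)
  next
    assume "\<exists>C1 C2 C3 C4 :: real \<Rightarrow> real.
       smooth_on {0<..} C1 \<and> smooth_on {0<..} C2 \<and> smooth_on {0<..} C3 \<and> smooth_on {0<..} C4 \<and>
       (\<forall>x\<in>U.
          A x $ 1 = C1 (rho x) * cos (phi x) + C2 (rho x) * sin (phi x) \<and>
          A x $ 2 = C3 (rho x) * cosh (lam * phi x) + C4 (rho x) * sinh (lam * phi x) \<and>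
          A x $ 3 = - C1 (rho x) * sin (phi x) + C2 (rho x) * cos (phi x) \<and>
          A x $ 4 = - C3 (rho x) * sinh (lam * phi x) - C4 (rho x) * cosh (lam * phi x))"
    then obtain C1 C2 C3 C4 :: "real \<Rightarrow> real" where Cs: "\<forall>x\<in>U.
          A x $ 1 = C1 (rho x) * cos (phi x) + C2 (rho x) * sin (phi x) \<and>
          A x $ 2 = C3 (rho x) * cosh (lam * phi x) + C4 (rho x) * sinh (lam * phi x) \<and>
          A x $ 3 = - C1 (rho x) * sin (phi x) + C2 (rho x) * cos (phi x) \<and>
          A x $ 4 = - C3 (rho x) * sinh (lam * phi x) - C4 (rho x) * cosh (lam * phi x)" by blast
    show "admits U A {(\<lambda>x. e13 x + lam *\<^sub>R e24 x), e1, e3}"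
      unfolding adm using backward_dir[OF Ud rd pd lam dA Cs] by blast
  qed
qed

end
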